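(* Let $X^{(n)}=\{X_1,\dots,X_n\}\subset\mathbb{R}^d$ and $u^{(n)}=\{u_1,\dots,u_n\}\subset\mathbb{R}^d$, and fix $i\in\{1,\dots,n\}$. Then for every $\ell\in\mathbb{N}$ with $\mathrm{TD}^-(u_i;u^{(n)})>\ell/n$, there exists $R>0$ such that $\hat T_{Z^{(n)}}(u_i)\in R\,\mathbb{B}$ for all $Z^{(n)}\in\mathcal{Q}_{\ell,n}$.
   Context: $\mathbb{B}=\{x:\|x\|\leq1\}$. For a set $Z^{(n)}$ of $n$ points, $\hat T_{Z^{(n)}}$ denotes any bijection $T:u^{(n)}\to Z^{(n)}$ minimizing $\frac1n\sum_j\|T(u_j)-u_j\|^2$. $\mathcal{Q}_{\ell,n}$ is the set of all sets $Z^{(n)}$ of $n$ points of $\mathbb{R}^d$ sharing exactly $n-\ell$ elements with $X^{(n)}$. Lower Tukey depth: $\mathrm{TD}^-(u;u^{(n)})=\frac{n+1}{n}-\max_{v\in\mathcal{S}^{d-1}}\frac1n\sum_j\mathbf{1}(\langle v,u_j-u\rangle\geq0)$. *)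

theory Defs
  imports "HOL-Analysis.Analysis"
begin

definition lower_tukey_depth :: "'a::euclidean_space \<Rightarrow> 'a set \<Rightarrow> real" where
  "lower_tukey_depth x U =
     (real (card U) + 1) / real (card U)
     - Max ((\<lambda>v. real (card {w \<in> U. inner v (w - x) \<ge> 0}) / real (card U)) ` sphere 0 1)"

definition is_optimal_transport :: "'a::euclidean_space set \<Rightarrow> 'a set \<Rightarrow> ('a \<Rightarrow> 'a) \<Rightarrow> bool" where
  "is_optimal_transport U Z T \<longleftrightarrow>
     bij_betw T U Z \<and>
     (\<forall>S. bij_betw S U Z \<longrightarrow>
        (\<Sum>u\<in>U. (norm (T u - u))\<^sup>2) / real (card U) \<le> (\<Sum>u\<in>U. (norm (S u - u))\<^sup>2) / real (card U))"

definition Q_set :: "nat \<Rightarrow> nat \<Rightarrow> 'a set \<Rightarrow> 'a set set" where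
  "Q_set l n X = {Z. finite Z \<and> card Z = n \<and> l \<le> n \<and> card (Z \<inter> X) = n - l}"

end

theory Submission
  imports Defs
begin

lemma cont_Max_fin:
  fixes f :: "'b \<Rightarrow> 'a::topological_space \<Rightarrow> real"
  assumes "finite S" "S \<noteq> {}" "\<And>w. w \<in> S \<Longrightarrow> continuous_on A (f w)"
  shows "continuous_on A (\<lambda>v. Max ((\<lambda>w. f w v) ` S))"
  using assms
proof (induction S rule: finite_ne_induct)
  case (singleton x)
  then show ?case by simp
next
  case (insert x F)
  have "(\<lambda>v. Max ((\<lambda>w. f w v) ` insert x F)) = (\<lambda>v. max (f x v) (Max ((\<lambda>w. f w v) ` F)))"
    using insert by (auto intro!: ext)
  then show ?case using insert by (auto intro!: continuous_on_max)
qed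

lemma fin_min_pos:
  assumes "finite F" "\<forall>S\<in>F. \<exists>d>0. P S d"
    and "\<And>S d d'. P S d \<Longrightarrow> 0 < d' \<Longrightarrow> d' \<le> d \<Longrightarrow> P S d'"
  shows "\<exists>d>0. \<forall>S\<in>F. P S (d::real)"
  using assms(1,2)
proof (induction F rule: finite_induct)
  case empty
  then show ?case using zero_less_one by blast
next
  case (insert x F)
  then obtain d where d: "d>0" "\<forall>S\<in>F. P S d" by auto
  from insert obtain e where e: "e>0" "P x e" by auto
  show ?case
    using d e assms(3)[of _ d "min d e"] assms(3)[of _ e "min d e"]
    by (intro exI[of _ "min d e"]) auto
qed

lemma sphere_ne: "sphere (0::'a::euclidean_space) 1 \<noteq> {}"
proof -
  obtain b :: 'a where "b \<in> Basis" using nonempty_Basis by blast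
  then show ?thesis by (auto simp: sphere_def intro!: exI[of _ b])
qed

lemma depth_count:
  fixes U :: "'a::euclidean_space set"
  assumes "finite U" "card U = n" "n > 0"
    and "lower_tukey_depth ui U > real l / real n"
    and "v \<in> sphere 0 1"
  shows "card {w\<in>U. inner v (w - ui) \<le> 0} + l \<le> n"
proof -
  let ?c = "\<lambda>v. real (card {w \<in> U. inner v (w - ui) \<ge> 0}) / real (card U)"
  have fin: "finite (?c ` sphere 0 1)"
  proof (rule finite_subset)
    show "?c ` sphere 0 1 \<subseteq> (\<lambda>k. real k / real n) ` {0..n}"
      using assms(1,2) by (auto intro!: imageI card_mono)
  qed auto
  have mv: "-v \<in> sphere 0 1" using assms(5) by auto
  have "?c (-v) \<le> Max (?c ` sphere 0 1)" using fin mv by (intro Max_ge) (blast, blast)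
  moreover have "{w \<in> U. inner (-v) (w - ui) \<ge> 0} = {w\<in>U. inner v (w - ui) \<le> 0}" by auto
  ultimately have "real (card {w\<in>U. inner v (w - ui) \<le> 0}) / real n \<le> Max (?c ` sphere 0 1)"
    using assms(2) by simp
  with assms(4) have "real l / real n < (real n + 1) / real n - real (card {w\<in>U. inner v (w - ui) \<le> 0}) / real n"
    unfolding lower_tukey_depth_def using assms(2) by simp
  also have "(real n + 1) / real n - real (card {w\<in>U. inner v (w - ui) \<le> 0}) / real n
     = (real n + 1 - real (card {w\<in>U. inner v (w - ui) \<le> 0})) / real n"
    by (simp add: diff_divide_distrib)
  finally have "real l < real n + 1 - real (card {w\<in>U. inner v (w - ui) \<le> 0})"
    using assms(3) by (simp add: divide_less_cancel)
  then show ?thesis by linarith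
qed

lemma swap_ineq:
  fixes U :: "'a::euclidean_space set"
  assumes "finite U" "is_optimal_transport U Z T" "a \<in> U" "b \<in> U" "a \<noteq> b"
  shows "inner (T a - T b) (a - b) \<ge> 0"
proof -
  have bij: "bij_betw T U Z" using assms(2) unfolding is_optimal_transport_def by blast
  let ?S = "T \<circ> Transposition.transpose a b"
  have "bij_betw (Transposition.transpose a b) U U"
    using assms(3,4) by (simp add: bij_betw_transpose_iff)
  then have bS: "bij_betw ?S U Z" using bij by (rule bij_betw_trans)
  have pos: "real (card U) > 0" using assms(1,3) card_gt_0_iff by fastforce
  have "(\<Sum>u\<in>U. (norm (T u - u))\<^sup>2) / real (card U) \<le> (\<Sum>u\<in>U. (norm (?S u - u))\<^sup>2) / real (card U)"
    using assms(2) bS unfolding is_optimal_transport_def by blast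
  then have le: "(\<Sum>u\<in>U. (norm (T u - u))\<^sup>2) \<le> (\<Sum>u\<in>U. (norm (?S u - u))\<^sup>2)"
    using pos by (simp add: divide_right_mono_neg divide_le_cancel)
  have "(\<Sum>u\<in>U. (norm (?S u - u))\<^sup>2 - (norm (T u - u))\<^sup>2)
      = (\<Sum>u\<in>{a,b}. (norm (?S u - u))\<^sup>2 - (norm (T u - u))\<^sup>2)"
    using assms(1,3,4) by (intro sum.mono_neutral_right) (auto simp: Transposition.transpose_def)
  also have "\<dots> = (norm (T b - a))\<^sup>2 + (norm (T a - b))\<^sup>2 - (norm (T a - a))\<^sup>2 - (norm (T b - b))\<^sup>2"
    using assms(5) by simp
  also have "\<dots> = 2 * inner (T a - T b) (a - b)"
    by (simp add: power2_norm_eq_inner inner_diff_left inner_diff_right inner_commute algebra_simps)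
  finally have "(\<Sum>u\<in>U. (norm (?S u - u))\<^sup>2) - (\<Sum>u\<in>U. (norm (T u - u))\<^sup>2) = 2 * inner (T a - T b) (a - b)"
    by (simp add: sum_subtractf)
  with le show ?thesis by linarith
qed

lemma margin:
  fixes U :: "'a::euclidean_space set"
  assumes "finite U" "\<forall>v\<in>sphere 0 1. card {w\<in>U. inner v (w - ui) \<le> 0} < k"
  shows "\<exists>d>0. \<forall>S\<in>{S. S \<subseteq> U \<and> card S = k}. \<forall>v\<in>sphere (0::'a) 1. \<exists>w\<in>S. inner v (w - ui) \<ge> d"
proof (rule fin_min_pos)
  show "finite {S. S \<subseteq> U \<and> card S = k}"
    using assms(1) by (rule finite_subset[rotated, OF finite_Pow_iff[THEN iffD2]]) auto
next
  fix S :: "'a set" and d d' :: real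
  show "\<forall>v\<in>sphere (0::'a) 1. \<exists>w\<in>S. d \<le> inner v (w - ui) \<Longrightarrow> 0 < d' \<Longrightarrow> d' \<le> d \<Longrightarrow>
        \<forall>v\<in>sphere (0::'a) 1. \<exists>w\<in>S. d' \<le> inner v (w - ui)"
    by (meson order_trans)
next
  show "\<forall>S\<in>{S. S \<subseteq> U \<and> card S = k}. \<exists>d>0. \<forall>v\<in>sphere (0::'a) 1. \<exists>w\<in>S. d \<le> inner v (w - ui)"
  proof
    fix S assume S: "S \<in> {S. S \<subseteq> U \<and> card S = k}"
    obtain v1 :: 'a where "v1 \<in> sphere 0 1" using sphere_ne by blast
    with assms(2) have kpos: "k > 0" by auto
    have finS: "finite S" using S assms(1) finite_subset by auto
    have neS: "S \<noteq> {}" using S kpos by auto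
    define f where "f = (\<lambda>v. Max ((\<lambda>w. inner v (w - ui)) ` S))"
    have cont: "continuous_on (sphere 0 1) f"
      unfolding f_def by (rule cont_Max_fin[OF finS neS]) (intro continuous_intros)
    obtain v0 where v0: "v0 \<in> sphere 0 1" "\<forall>v\<in>sphere 0 1. f v0 \<le> f v"
      using continuous_attains_inf[OF compact_sphere sphere_ne cont] by blast
    have fpos: "f v0 > 0"
    proof (rule ccontr)
      assume "\<not> f v0 > 0"
      then have "\<forall>w\<in>S. inner v0 (w - ui) \<le> 0"
        unfolding f_def using finS by (meson Max_ge finite_imageI imageI le_less_trans not_le)
      then have "S \<subseteq> {w\<in>U. inner v0 (w - ui) \<le> 0}" using S by auto
      then have "card S \<le> card {w\<in>U. inner v0 (w - ui) \<le> 0}"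
        using assms(1) by (intro card_mono) auto
      moreover have "card {w\<in>U. inner v0 (w - ui) \<le> 0} < k" using assms(2) v0(1) by blast
      ultimately show False using S by auto
    qed
    show "\<exists>d>0. \<forall>v\<in>sphere (0::'a) 1. \<exists>w\<in>S. d \<le> inner v (w - ui)"
    proof (intro exI[of _ "f v0"] conjI ballI)
      fix v :: 'a assume v: "v \<in> sphere 0 1"
      have "f v \<in> (\<lambda>w. inner v (w - ui)) ` S" unfolding f_def using finS neS by (intro Max_in) auto
      then obtain w where "w \<in> S" "f v = inner v (w - ui)" by auto
      then show "\<exists>w\<in>S. f v0 \<le> inner v (w - ui)" using v0(2) v by metis
    qed (rule fpos)
  qed
qed

theorem mainTheorem10:
  fixes X U :: "'a::euclidean_space set" and n l :: nat and ui :: 'a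
  assumes "finite X" "card X = n" "finite U" "card U = n"
    and "ui \<in> U"
    and "lower_tukey_depth ui U > real l / real n"
  shows "\<exists>R>0. \<forall>Z\<in>Q_set l n X. \<forall>T. is_optimal_transport U Z T \<longrightarrow> T ui \<in> cball 0 R"
proof -
  have npos: "n > 0" using assms(3,4,5) card_gt_0_iff by fastforce
  have H: "\<forall>v\<in>sphere 0 1. card {w\<in>U. inner v (w - ui) \<le> 0} < n - l + 1"
    using depth_count[OF assms(3,4) npos assms(6)] by fastforce
  obtain d where d: "d > 0"
    "\<forall>S\<in>{S. S \<subseteq> U \<and> card S = n - l + 1}. \<forall>v\<in>sphere (0::'a) 1. \<exists>w\<in>S. inner v (w - ui) \<ge> d"
    using margin[OF assms(3) H] by blast
  obtain B where B: "B > 0" "\<forall>x\<in>X. norm x \<le> B"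
    using finite_imp_bounded[OF assms(1)] bounded_pos by blast
  obtain D where D: "D > 0" "\<forall>y\<in>(\<lambda>u. u - ui) ` U. norm y \<le> D"
    using finite_imp_bounded[OF finite_imageI[OF assms(3)]] bounded_pos by blast
  define R where "R = B + B * D / d + 1"
  have Rpos: "R > 0" unfolding R_def using B D d by (simp add: add_pos_nonneg)
  show ?thesis
  proof (intro exI[of _ R] conjI ballI allI impI Rpos)
    fix Z T assume Z: "Z \<in> Q_set l n X" and T: "is_optimal_transport U Z T"
    have bij: "bij_betw T U Z" using T unfolding is_optimal_transport_def by blast
    have lle: "l \<le> n" and cZX: "card (Z \<inter> X) = n - l" using Z unfolding Q_set_def by auto
    let ?z = "T ui"
    show "?z \<in> cball 0 R"
    proof (rule ccontr)
      assume "?z \<notin> cball 0 R"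
      then have zR: "norm ?z > R" by auto
      then have "norm ?z > B" unfolding R_def using B D d by (smt (verit) divide_nonneg_pos mult_nonneg_nonneg)
      then have zX: "?z \<notin> X" using B by auto
      have zpos: "norm ?z > 0" using zR Rpos by linarith
      define P where "P = {u\<in>U. T u \<in> X}"
      have "T ` P = Z \<inter> X" using bij unfolding P_def bij_betw_def by auto
      moreover have "inj_on T P" using bij unfolding P_def bij_betw_def by (auto intro: inj_on_subset)
      ultimately have cP: "card P = n - l" using cZX card_image by metis
      have uiP: "ui \<notin> P" using zX unfolding P_def by auto
      have finP: "finite P" using assms(3) unfolding P_def by auto
      define S where "S = insert ui P"
      have "S \<in> {S. S \<subseteq> U \<and> card S = n - l + 1}"
        unfolding S_def using cP uiP finP assms(5) by (auto simp: P_def)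
      moreover define v where "v = ?z /\<^sub>R norm ?z"
      have v: "v \<in> sphere 0 1" unfolding v_def using zpos by simp
      ultimately obtain w where w: "w \<in> S" "inner v (w - ui) \<ge> d" using d(2) by blast
      show False
      proof (cases "w = ui")
        case True then show False using w d by simp
      next
        case False
        then have wP: "w \<in> P" using w unfolding S_def by auto
        then have wU: "w \<in> U" and TwX: "T w \<in> X" unfolding P_def by auto
        have "inner (?z - T w) (ui - w) \<ge> 0"
          using swap_ineq[OF assms(3) T assms(5) wU] False by auto
        then have "inner ?z (w - ui) \<le> inner (T w) (w - ui)"
          by (simp add: inner_diff_left inner_diff_right algebra_simps)
        also have "\<dots> \<le> norm (T w) * norm (w - ui)" by (rule norm_cauchy_schwarz)
        also have "\<dots> \<le> B * D"
          using B D TwX wU by (intro mult_mono) auto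
        finally have i1: "inner ?z (w - ui) \<le> B * D" .
        have "inner v (w - ui) = inner ?z (w - ui) / norm ?z" unfolding v_def by (simp add: divide_inverse_commute)
        also have "\<dots> \<le> B * D / norm ?z" using i1 zpos by (simp add: divide_right_mono)
        also have "\<dots> < d"
        proof -
          have "B * D / d < norm ?z" using zR unfolding R_def using B by linarith
          then have "B * D < d * norm ?z" using d by (simp add: divide_less_eq mult.commute)
          then show ?thesis using zpos by (simp add: divide_less_eq)
        qed
        finally show False using w by linarith
      qed
    qed
  qed
qed

end
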